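(* Let $X$ and $Y$ be metric spaces, and assume that $Y$ is metrically convex and unbounded. Let $K\ge0$ and let $f:X\to Y$ be a coarse quotient map with constant $K$ that is coarse Lipschitz. Then $${\rm Lip}_\infty(f)\,c_\infty(f)\ge 1.$$
   Context: For a metric space $Z$, $B_Z(z,r)$ is the closed ball of radius $r$ about $z$; for $A\subseteq Y$, $A^K:=\{y\in Y: d_Y(y,a)\le K\text{ for some }a\in A\}$. $Y$ is metrically convex if for all $y_0,y_1\in Y$ and $0<\lambda<1$ there is $y_\lambda$ with $d(y_0,y_\lambda)=\lambda d(y_0,y_1)$ and $d(y_1,y_\lambda)=(1-\lambda)d(y_0,y_1)$. The modulus of continuity of $f$ is $\omega_f(t):=\sup\{d_Y(f(x),f(y)): d_X(x,y)\le t\}$; $f$ is coarsely continuous if $\omega_f(t)<\infty$ for all $t>0$. $f$ is co-coarsely continuous with constant $K$ if for every $d>K$ there is $\delta(d)>0$ with $f(B_X(x,\delta))^K\supseteq B_Y(f(x),d)$ for all $x\in X$. $f$ is a coarse quotient map with constant $K$ if it is coarsely continuous and co-coarsely continuous with constant $K$. For $s>0$, ${\rm Lip}_s(f):=\sup\{d_Y(f(x),f(y))/d_X(x,y): d_X(x,y)\ge s\}$, ${\rm Lip}_\infty(f):=\inf_{s>0}{\rm Lip}_s(f)$, and $f$ is coarse Lipschitz if ${\rm Lip}_s(f)<\infty$ for some $s>0$. For $d>K$, let $c_d$ be the infimum of all $c>0$ such that $f(B_X(x,cr))^K\supseteq B_Y(f(x),r)$ for all $x\in X$ and all $r\ge d$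 (such $c$ exist since $Y$ is metrically convex); $(c_d)_{d>K}$ is non-increasing, and $c_\infty(f):=\inf_{d>K}c_d=\lim_{d\to\infty}c_d$. *)

theory Defs
  imports "HOL-Analysis.Analysis"
begin

definition nbhd :: "real \<Rightarrow> 'b::metric_space set \<Rightarrow> 'b set" where
  "nbhd K A = {y. \<exists>a\<in>A. dist y a \<le> K}"

definition metrically_convex :: "'b::metric_space itself \<Rightarrow> bool" where
  "metrically_convex (_ :: 'b itself) \<longleftrightarrow>
     (\<forall>(y0::'b) y1 (l::real). 0 < l \<and> l < 1 \<longrightarrow>
        (\<exists>yl. dist y0 yl = l * dist y0 y1 \<and> dist y1 yl = (1 - l) * dist y0 y1))"

definition modulus :: "('a::metric_space \<Rightarrow> 'b::metric_space) \<Rightarrow> real \<Rightarrow> ereal" where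
  "modulus f t = (SUP p \<in> {(x, y). dist x y \<le> t}. ereal (dist (f (fst p)) (f (snd p))))"

definition coarsely_continuous :: "('a::metric_space \<Rightarrow> 'b::metric_space) \<Rightarrow> bool" where
  "coarsely_continuous f \<longleftrightarrow> (\<forall>t>0. modulus f t < \<infinity>)"

definition co_coarsely_continuous :: "('a::metric_space \<Rightarrow> 'b::metric_space) \<Rightarrow> real \<Rightarrow> bool" where
  "co_coarsely_continuous f K \<longleftrightarrow>
     (\<forall>d>K. \<exists>\<delta>>0. \<forall>x. cball (f x) d \<subseteq> nbhd K (f ` cball x \<delta>))"

definition coarse_quotient_map :: "('a::metric_space \<Rightarrow> 'b::metric_space) \<Rightarrow> real \<Rightarrow> bool" where
  "coarse_quotient_map f K \<longleftrightarrow> coarsely_continuous f \<and> co_coarsely_continuous f K"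

text \<open>Lip_s(f); the supremum of the empty set is taken to be 0 (all quotients are \<ge> 0).\<close>
definition Lip_s :: "real \<Rightarrow> ('a::metric_space \<Rightarrow> 'b::metric_space) \<Rightarrow> ereal" where
  "Lip_s s f = Sup (insert 0 {ereal (dist (f x) (f y) / dist x y) | x y. dist x y \<ge> s})"

definition Lip_inf :: "('a::metric_space \<Rightarrow> 'b::metric_space) \<Rightarrow> ereal" where
  "Lip_inf f = (INF s \<in> {s. s > 0}. Lip_s s f)"

definition coarse_Lipschitz :: "('a::metric_space \<Rightarrow> 'b::metric_space) \<Rightarrow> bool" where
  "coarse_Lipschitz f \<longleftrightarrow> (\<exists>s>0. Lip_s s f < \<infinity>)"

definition c_d :: "('a::metric_space \<Rightarrow> 'b::metric_space) \<Rightarrow> real \<Rightarrow> real \<Rightarrow> ereal" where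
  "c_d f K d = Inf (ereal ` {c. c > 0 \<and>
       (\<forall>x r. r \<ge> d \<longrightarrow> cball (f x) r \<subseteq> nbhd K (f ` cball x (c * r)))})"

definition c_inf :: "('a::metric_space \<Rightarrow> 'b::metric_space) \<Rightarrow> real \<Rightarrow> ereal" where
  "c_inf f K = (INF d \<in> {d. d > K}. c_d f K d)"

end

theory Submission
  imports Defs
begin

lemma chain_step:
  fixes f :: "'a::metric_space \<Rightarrow> 'b::metric_space" and K :: real
  assumes mc: "metrically_convex TYPE('b)"
    and K: "K \<ge> 0" and dpos: "\<delta> > 0"
    and cc: "\<And>x. cball (f x) (K+1) \<subseteq> nbhd K (f ` cball x \<delta>)"
  shows "\<forall>x y. dist (f x) y \<le> real n \<longrightarrow> (\<exists>x'. dist x x' \<le> real n * \<delta> \<and> dist y (f x') \<le> K)"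
proof (induction n)
  case 0
  then show ?case using K by auto
next
  case (Suc n)
  show ?case
  proof (intro allI impI)
    fix x y assume hy: "dist (f x) y \<le> real (Suc n)"
    obtain z where z1: "dist (f x) z \<le> real n" and z2: "dist z y \<le> 1"
    proof (cases "dist (f x) y \<le> 1")
      case True
      then show ?thesis using that[of "f x"] by simp
    next
      case False
      define D where "D = dist (f x) y"
      have D1: "D > 1" using False D_def by simp
      define l where "l = (D - 1) / D"
      have l: "0 < l" "l < 1" using D1 by (auto simp: l_def field_simps)
      then obtain z where "dist (f x) z = l * D" "dist y z = (1 - l) * D"
        using mc unfolding metrically_convex_def D_def by blast
      moreover have "l * D = D - 1" "(1 - l) * D = 1" using D1 by (auto simp: l_def field_simps)
      ultimately show ?thesis using that[of z] hy D_def by (simp add: dist_commute)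
    qed
    obtain x' where x1: "dist x x' \<le> real n * \<delta>" and x2: "dist z (f x') \<le> K"
      using Suc z1 by blast
    have "dist (f x') y \<le> K + 1"
      using dist_triangle[of "f x'" y z] x2 z2 by (simp add: dist_commute)
    then have "y \<in> nbhd K (f ` cball x' \<delta>)" using cc[of x'] by auto
    then obtain x'' where x3: "dist x' x'' \<le> \<delta>" and x4: "dist y (f x'') \<le> K"
      unfolding nbhd_def by auto
    have "dist x x'' \<le> real (Suc n) * \<delta>"
      using dist_triangle[of x x'' x'] x1 x3 by (simp add: algebra_simps)
    then show "\<exists>x'. dist x x' \<le> real (Suc n) * \<delta> \<and> dist y (f x') \<le> K"
      using x4 by blast
  qed
qed

lemma exists_adm:
  fixes f :: "'a::metric_space \<Rightarrow> 'b::metric_space" and K :: real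
  assumes mc: "metrically_convex TYPE('b)"
    and K: "K \<ge> 0" and cq: "coarse_quotient_map f K"
  shows "\<exists>d c. d > K \<and> c > 0 \<and> (\<forall>x r. r \<ge> d \<longrightarrow> cball (f x) r \<subseteq> nbhd K (f ` cball x (c * r)))"
proof -
  obtain \<delta> where dpos: "\<delta> > 0" and cc: "\<And>x. cball (f x) (K+1) \<subseteq> nbhd K (f ` cball x \<delta>)"
    using cq unfolding coarse_quotient_map_def co_coarsely_continuous_def
    by (meson less_add_one)
  have adm: "cball (f x) r \<subseteq> nbhd K (f ` cball x ((2*\<delta>) * r))" if r: "r \<ge> K + 1" for x r
  proof
    fix y assume "y \<in> cball (f x) r"
    then have hy: "dist (f x) y \<le> r" by simp
    define n where "n = nat \<lceil>r\<rceil>"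
    have n1: "r \<le> real n" "real n \<le> r + 1" using r K by (auto simp: n_def)
    obtain x' where "dist x x' \<le> real n * \<delta>" "dist y (f x') \<le> K"
      using chain_step[OF mc K dpos cc, of n] hy n1 by force
    moreover have "real n * \<delta> \<le> (2*\<delta>) * r"
    proof -
      have "real n \<le> 2 * r" using n1 r K by linarith
      then show ?thesis using dpos by (simp add: mult_right_mono algebra_simps)
    qed
    ultimately show "y \<in> nbhd K (f ` cball x ((2*\<delta>) * r))"
      unfolding nbhd_def by force
  qed
  show ?thesis
    by (rule exI[of _ "K+1"], rule exI[of _ "2*\<delta>"]) (use dpos adm in auto)
qed

lemma lip_lower:
  fixes f :: "'a::metric_space \<Rightarrow> 'b::metric_space" and K :: real
  assumes mc: "metrically_convex TYPE('b)"
    and ub: "\<not> bounded (UNIV :: 'b set)"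
    and K: "K \<ge> 0" and ccont: "coarsely_continuous f"
    and cpos: "c > 0"
    and adm: "\<forall>x r. r \<ge> d \<longrightarrow> cball (f x) r \<subseteq> nbhd K (f ` cball x (c * r))"
    and spos: "s > 0"
  shows "ereal (1/c) \<le> Lip_s s f"
proof (rule ccontr)
  assume "\<not> ereal (1/c) \<le> Lip_s s f"
  then have lt: "Lip_s s f < ereal (1/c)" by simp
  have ge0: "0 \<le> Lip_s s f" unfolding Lip_s_def by (rule Sup_upper) simp
  obtain L where LL: "Lip_s s f = ereal L" using lt ge0
    by (cases "Lip_s s f") auto
  have L0: "0 \<le> L" "L < 1/c" using LL lt ge0 by auto
  have cL: "c * L < 1" using L0 cpos by (simp add: field_simps)
  have mf: "modulus f s < \<infinity>" using ccont spos unfolding coarsely_continuous_def by blast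
  obtain M where MM: "modulus f s = ereal M"
  proof -
    have "0 \<le> modulus f s" unfolding modulus_def
      by (rule order_trans[OF _ SUP_upper[of "(undefined, undefined)"]]) (use spos in auto)
    then show ?thesis using mf that by (cases "modulus f s") auto
  qed
  have Mb: "dist (f x) (f y) \<le> M" if "dist x y \<le> s" for x y
  proof -
    have "ereal (dist (f x) (f y)) \<le> modulus f s" unfolding modulus_def
      using SUP_upper[of "(x,y)" "{(x, y). dist x y \<le> s}" "\<lambda>p. ereal (dist (f (fst p)) (f (snd p)))"] that by auto
    then show ?thesis using MM by simp
  qed
  have M0: "0 \<le> M" using Mb[of undefined undefined] spos by simp
  define r where "r = max d (max (M + K + 1) (K / (1 - c*L) + 1))"
  have r: "r \<ge> d" "r \<ge> M + K + 1" "r > K / (1 - c*L)" unfolding r_def by auto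
  have rpos: "r > 0" using r M0 K by linarith
  define x0 :: 'a where "x0 = undefined"
  obtain w where w: "dist (f x0) w > r"
    using ub unfolding bounded_any_center[of _ "f x0"] by (meson not_le)
  define l where "l = r / dist (f x0) w"
  have wp: "dist (f x0) w > 0" using w rpos by linarith
  have l: "0 < l" "l < 1" using w rpos wp by (auto simp: l_def divide_less_eq)
  then obtain z where "dist (f x0) z = l * dist (f x0) w"
    using mc unfolding metrically_convex_def by blast
  then have z: "dist (f x0) z = r" using w rpos wp by (simp add: l_def)
  then have "z \<in> cball (f x0) r" by simp
  then have "z \<in> nbhd K (f ` cball x0 (c * r))" using adm r(1) by blast
  then obtain y where y1: "dist x0 y \<le> c * r" and y2: "dist z (f y) \<le> K"
    unfolding nbhd_def by auto
  have fy: "dist (f x0) (f y) \<ge> r - K"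
    using dist_triangle[of "f x0" z "f y"] z y2 by (simp add: dist_commute)
  have "dist x0 y > s"
  proof (rule ccontr)
    assume "\<not> dist x0 y > s"
    then have "dist (f x0) (f y) \<le> M" using Mb by simp
    then show False using fy r by linarith
  qed
  then have q: "ereal (dist (f x0) (f y) / dist x0 y) \<le> Lip_s s f"
    unfolding Lip_s_def by (intro Sup_upper) (use \<open>dist x0 y > s\<close> in force)
  have dpos: "dist x0 y > 0" using \<open>dist x0 y > s\<close> spos by linarith
  have "dist (f x0) (f y) / dist x0 y \<le> L" using q LL by simp
  then have "dist (f x0) (f y) \<le> L * dist x0 y" using dpos by (simp add: field_simps)
  also have "\<dots> \<le> L * (c * r)" using y1 L0 by (simp add: mult_left_mono)
  finally have "r - K \<le> (c * L) * r" using fy by (simp add: algebra_simps)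
  then have "r * (1 - c * L) \<le> K" by (simp add: algebra_simps)
  then have "r \<le> K / (1 - c*L)" using cL by (simp add: field_simps)
  then show False using r by linarith
qed

theorem lemma2p4:
  fixes f :: "'a::metric_space \<Rightarrow> 'b::metric_space" and K :: real
  assumes "metrically_convex TYPE('b)"
    and "\<not> bounded (UNIV :: 'b set)"
    and "K \<ge> 0"
    and "coarse_quotient_map f K"
    and "coarse_Lipschitz f"
  shows "Lip_inf f * c_inf f K \<ge> 1"
proof -
  note mc = assms(1) and ub = assms(2) and K = assms(3) and cq = assms(4)
  have ccont: "coarsely_continuous f" using cq unfolding coarse_quotient_map_def by simp
  have LA: "ereal (1/c) \<le> Lip_inf f"
    if "c > 0" "\<forall>x r. r \<ge> d \<longrightarrow> cball (f x) r \<subseteq> nbhd K (f ` cball x (c * r))" for c d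
    unfolding Lip_inf_def
    by (rule INF_greatest) (use lip_lower[OF mc ub K ccont that] in auto)
  obtain s where "s > 0" "Lip_s s f < \<infinity>" using assms(5) unfolding coarse_Lipschitz_def by blast
  then have fin: "Lip_inf f < \<infinity>" unfolding Lip_inf_def
    by (meson INF_lower le_less_trans mem_Collect_eq)
  obtain d0 c0 where c0: "c0 > 0" "\<forall>x r. r \<ge> d0 \<longrightarrow> cball (f x) r \<subseteq> nbhd K (f ` cball x (c0 * r))"
    using exists_adm[OF mc K cq] by blast
  have pos: "ereal (1/c0) \<le> Lip_inf f" using LA[OF c0] .
  have "0 < ereal (1/c0)" using c0 by simp
  then obtain l where ll: "Lip_inf f = ereal l" "l > 0" using pos fin
    by (cases "Lip_inf f") (auto, meson less_le_trans zero_less_divide_1_iff)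
  have C: "ereal (1/l) \<le> c_inf f K"
    unfolding c_inf_def c_d_def
  proof (rule INF_greatest, rule Inf_greatest)
    fix d y assume "d \<in> {d. d > K}" and "y \<in> ereal ` {c. c > 0 \<and> (\<forall>x r. r \<ge> d \<longrightarrow> cball (f x) r \<subseteq> nbhd K (f ` cball x (c * r)))}"
    then obtain c where y: "y = ereal c" and c: "c > 0"
      "\<forall>x r. r \<ge> d \<longrightarrow> cball (f x) r \<subseteq> nbhd K (f ` cball x (c * r))" by blast
    have "1/c \<le> l" using LA[OF c] ll by simp
    then have "1/l \<le> c" using c ll by (simp add: field_simps)
    then show "ereal (1/l) \<le> y" using y by simp
  qed
  have "ereal l * ereal (1/l) \<le> ereal l * c_inf f K"
    by (rule ereal_mult_left_mono[OF C]) (use ll in simp)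
  then show ?thesis using ll by (simp add: one_ereal_def)
qed

end
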